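(* Let $R$ be a commutative Noetherian ring and $n$ a non-negative integer. Let $0\to M'\to M\to M''\to 0$ be an exact sequence of $R$-modules. Then $M$ is in dimension $<n$ if and only if both $M'$ and $M''$ are in dimension $<n$.
   Context: For an $R$-module $L$, $\dim\operatorname{Supp}L=\sup\{\dim R/\mathfrak p:\mathfrak p\in\operatorname{Supp}L\}$, the zero module having dimension $-\infty$. An $R$-module $L$ is "in dimension $<n$" if there is a finitely generated submodule $N\subseteq L$ with $\dim\operatorname{Supp}(L/N)<n$. *)

theory Defs
  imports "HOL-Algebra.Algebra" "HOL-Library.Extended_Real"
begin

definition module_hom ::
  "('a, 'r) ring_scheme \<Rightarrow> ('a, 'b) module \<Rightarrow> ('a, 'c) module \<Rightarrow> ('b \<Rightarrow> 'c) \<Rightarrow> bool" where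
  "module_hom R A B f \<longleftrightarrow>
     f \<in> carrier A \<rightarrow> carrier B \<and>
     (\<forall>x\<in>carrier A. \<forall>y\<in>carrier A. f (x \<oplus>\<^bsub>A\<^esub> y) = f x \<oplus>\<^bsub>B\<^esub> f y) \<and>
     (\<forall>a\<in>carrier R. \<forall>x\<in>carrier A. f (a \<odot>\<^bsub>A\<^esub> x) = a \<odot>\<^bsub>B\<^esub> f x)"

definition short_exact ::
  "('a, 'r) ring_scheme \<Rightarrow> ('a, 'b) module \<Rightarrow> ('a, 'c) module \<Rightarrow> ('a, 'd) module
     \<Rightarrow> ('b \<Rightarrow> 'c) \<Rightarrow> ('c \<Rightarrow> 'd) \<Rightarrow> bool" where
  "short_exact R A B C f g \<longleftrightarrow>
     module_hom R A B f \<and> module_hom R B C g \<and>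
     inj_on f (carrier A) \<and>
     g ` carrier B = carrier C \<and>
     f ` carrier A = {y \<in> carrier B. g y = \<zero>\<^bsub>C\<^esub>}"

definition gen_submodule :: "('a, 'r) ring_scheme \<Rightarrow> ('a, 'b) module \<Rightarrow> 'b set \<Rightarrow> 'b set" where
  "gen_submodule R L S = \<Inter>{H. submodule H R L \<and> S \<subseteq> H}"

definition fin_gen_submodule :: "('a, 'r) ring_scheme \<Rightarrow> ('a, 'b) module \<Rightarrow> 'b set \<Rightarrow> bool" where
  "fin_gen_submodule R L N \<longleftrightarrow> submodule N R L \<and>
     (\<exists>S. finite S \<and> S \<subseteq> carrier L \<and> N = gen_submodule R L S)"

definition quot_add :: "('a, 'b) module \<Rightarrow> 'b set \<Rightarrow> 'b set \<Rightarrow> 'b set" where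
  "quot_add L A B = {x \<oplus>\<^bsub>L\<^esub> y | x y. x \<in> A \<and> y \<in> B}"

definition quot_smult :: "('a, 'b) module \<Rightarrow> 'b set \<Rightarrow> 'a \<Rightarrow> 'b set \<Rightarrow> 'b set" where
  "quot_smult L N a A = (\<Union>x\<in>A. {h \<oplus>\<^bsub>L\<^esub> (a \<odot>\<^bsub>L\<^esub> x) | h. h \<in> N})"

definition quot_module :: "('a, 'r) ring_scheme \<Rightarrow> ('a, 'b) module \<Rightarrow> 'b set \<Rightarrow> ('a, 'b set) module" where
  "quot_module R L N =
     \<lparr> carrier = {{h \<oplus>\<^bsub>L\<^esub> x | h. h \<in> N} | x. x \<in> carrier L},
       monoid.mult = undefined, one = undefined,
       ring.zero = N,
       ring.add = quot_add L,
       smult = quot_smult L N \<rparr>"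

text \<open>Support: primes p with L_p \<noteq> 0, i.e. some x/1 \<noteq> 0 in L_p, i.e. no s \<notin> p kills x.\<close>
definition supp :: "('a, 'r) ring_scheme \<Rightarrow> ('a, 'b) module \<Rightarrow> 'a set set" where
  "supp R L = {p. primeideal p R \<and>
     (\<exists>x\<in>carrier L. \<forall>s\<in>carrier R - p. s \<odot>\<^bsub>L\<^esub> x \<noteq> \<zero>\<^bsub>L\<^esub>)}"

text \<open>Krull dimension of R/p: supremum of lengths k of chains of primes
  p \<subseteq> P0 \<subset> P1 \<subset> ... \<subset> Pk (primes of R/p correspond to primes of R containing p).\<close>
definition dim_quot :: "('a, 'r) ring_scheme \<Rightarrow> 'a set \<Rightarrow> enat" where
  "dim_quot R p = Sup {enat k | k. \<exists>c :: nat \<Rightarrow> 'a set.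
      (\<forall>i\<le>k. primeideal (c i) R) \<and> p \<subseteq> c 0 \<and> (\<forall>i<k. c i \<subset> c (Suc i))}"

text \<open>dim Supp L = sup of dim R/p over p in Supp L; -\<infinity> for the zero module.\<close>
definition dim_supp :: "('a, 'r) ring_scheme \<Rightarrow> ('a, 'b) module \<Rightarrow> ereal" where
  "dim_supp R L = Sup ((\<lambda>p. ereal_of_enat (dim_quot R p)) ` supp R L)"

definition in_dim_less :: "('a, 'r) ring_scheme \<Rightarrow> ('a, 'b) module \<Rightarrow> nat \<Rightarrow> bool" where
  "in_dim_less R L n \<longleftrightarrow>
     (\<exists>N. fin_gen_submodule R L N \<and> dim_supp R (quot_module R L N) < ereal (real n))"

end

theory Submission
  imports Defs
begin



locale modl = module R M for R :: "('a,'r) ring_scheme" (structure) and M :: "('a,'c) module" (structure)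

context modl begin

lemma sub_zero: "submodule H R M \<Longrightarrow> \<zero>\<^bsub>M\<^esub> \<in> H"
  by (simp add: submodule_def subgroup_def)


lemma gen_sub: "S \<subseteq> carrier M \<Longrightarrow> submodule (gen_submodule R M S) R M"
  unfolding gen_submodule_def
proof (rule submoduleI)
  let ?F = "{H. submodule H R M \<and> S \<subseteq> H}"
  have c: "carrier M \<in> ?F" if "S \<subseteq> carrier M" using carrier_is_submodule that by auto
  assume S: "S \<subseteq> carrier M"
  show "\<Inter>?F \<subseteq> carrier M" using c[OF S] by auto
  show "\<zero>\<^bsub>M\<^esub> \<in> \<Inter>?F" using sub_zero by blast
  show "\<ominus>\<^bsub>M\<^esub> a \<in> \<Inter>?F" if "a \<in> \<Inter>?F" for a using that submoduleE(3) by blast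
  show "a \<oplus>\<^bsub>M\<^esub> b \<in> \<Inter>?F" if "a \<in> \<Inter>?F" "b \<in> \<Inter>?F" for a b using that submoduleE(5) by blast
  show "a \<odot>\<^bsub>M\<^esub> x \<in> \<Inter>?F" if "a \<in> carrier R" "x \<in> \<Inter>?F" for a x using that submoduleE(4) by blast
qed

lemma gen_incl: "S \<subseteq> gen_submodule R M S"
  unfolding gen_submodule_def by auto

lemma gen_min: "submodule H R M \<Longrightarrow> S \<subseteq> H \<Longrightarrow> gen_submodule R M S \<subseteq> H"
  unfolding gen_submodule_def by auto

lemma gen_mono: "S \<subseteq> T \<Longrightarrow> T \<subseteq> carrier M \<Longrightarrow> gen_submodule R M S \<subseteq> gen_submodule R M T"
  using gen_min gen_sub gen_incl by (meson order_trans)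


lemma sub_minus: "submodule H R M \<Longrightarrow> a \<in> H \<Longrightarrow> b \<in> H \<Longrightarrow> a \<ominus>\<^bsub>M\<^esub> b \<in> H"
  unfolding a_minus_def using submoduleE(3,5) by blast

end

lemma hom_zero:
  assumes "module R A" "module R B" "module_hom R A B f"
  shows "f \<zero>\<^bsub>A\<^esub> = \<zero>\<^bsub>B\<^esub>"
proof -
  interpret A: modl R A by (simp add: assms modl_def)
  interpret B: modl R B by (simp add: assms modl_def)
  have f: "f \<zero>\<^bsub>A\<^esub> \<in> carrier B" using assms(3) unfolding module_hom_def by auto
  have "f \<zero>\<^bsub>A\<^esub> = f \<zero>\<^bsub>A\<^esub> \<oplus>\<^bsub>B\<^esub> f \<zero>\<^bsub>A\<^esub>"
    using assms(3) unfolding module_hom_def by (metis A.M.zero_closed A.M.l_zero)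
  then show ?thesis using f by (metis B.M.add.r_cancel_one' )
qed

lemma hom_neg:
  assumes "module R A" "module R B" "module_hom R A B f" "x \<in> carrier A"
  shows "f (\<ominus>\<^bsub>A\<^esub> x) = \<ominus>\<^bsub>B\<^esub> f x"
proof -
  interpret A: modl R A by (simp add: assms modl_def)
  interpret B: modl R B by (simp add: assms modl_def)
  have cl: "\<And>y. y \<in> carrier A \<Longrightarrow> f y \<in> carrier B" using assms(3) unfolding module_hom_def by auto
  have "f x \<oplus>\<^bsub>B\<^esub> f (\<ominus>\<^bsub>A\<^esub> x) = \<zero>\<^bsub>B\<^esub>"
    using assms hom_zero[OF assms(1,2,3)] unfolding module_hom_def by (metis A.M.r_neg A.M.add.inv_closed)
  then show ?thesis using cl assms(4) by (metis A.M.add.inv_closed B.M.minus_equality B.M.a_comm)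
qed

lemma hom_minus:
  assumes "module R A" "module R B" "module_hom R A B f" "x \<in> carrier A" "y \<in> carrier A"
  shows "f (x \<ominus>\<^bsub>A\<^esub> y) = f x \<ominus>\<^bsub>B\<^esub> f y"
  using assms hom_neg[OF assms(1,2,3)] unfolding module_hom_def a_minus_def
  by (metis abelian_group.a_inv_closed module.axioms(2))

lemma hom_preimage_sub:
  assumes "module R A" "module R B" "module_hom R A B f" "submodule H R B"
  shows "submodule {x \<in> carrier A. f x \<in> H} R A"
proof -
  interpret A: modl R A by (simp add: assms modl_def)
  interpret B: modl R B by (simp add: assms modl_def)
  show ?thesis
  proof (rule A.submoduleI)
    show "\<zero>\<^bsub>A\<^esub> \<in> {x \<in> carrier A. f x \<in> H}" using hom_zero[OF assms(1,2,3)] B.sub_zero[OF assms(4)] by auto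
    show "\<ominus>\<^bsub>A\<^esub> a \<in> {x \<in> carrier A. f x \<in> H}" if "a \<in> {x \<in> carrier A. f x \<in> H}" for a
      using that hom_neg[OF assms(1,2,3)] B.submoduleE(3)[OF assms(4)] by auto
    show "a \<oplus>\<^bsub>A\<^esub> b \<in> {x \<in> carrier A. f x \<in> H}" if "a \<in> {x \<in> carrier A. f x \<in> H}" "b \<in> {x \<in> carrier A. f x \<in> H}" for a b
      using that assms(3) B.submoduleE(5)[OF assms(4)] unfolding module_hom_def by auto
    show "a \<odot>\<^bsub>A\<^esub> x \<in> {x \<in> carrier A. f x \<in> H}" if "a \<in> carrier R" "x \<in> {x \<in> carrier A. f x \<in> H}" for a x
      using that assms(3) B.submoduleE(4)[OF assms(4)] unfolding module_hom_def by auto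
  qed auto
qed

lemma hom_image_sub:
  assumes "module R A" "module R B" "module_hom R A B f" "submodule H R A"
  shows "submodule (f ` H) R B"
proof -
  interpret A: modl R A by (simp add: assms modl_def)
  interpret B: modl R B by (simp add: assms modl_def)
  have Hc: "H \<subseteq> carrier A" using A.submoduleE(1)[OF assms(4)] .
  show ?thesis
  proof (rule B.submoduleI)
    show "f ` H \<subseteq> carrier B" using Hc assms(3) unfolding module_hom_def by auto
    show "\<zero>\<^bsub>B\<^esub> \<in> f ` H" using hom_zero[OF assms(1,2,3)] A.sub_zero[OF assms(4)] by (metis image_eqI)
    show "\<ominus>\<^bsub>B\<^esub> a \<in> f ` H" if ha: "a \<in> f ` H" for a
    proof -
      obtain x where "x \<in> H" "a = f x" using ha by auto
      moreover have "f (\<ominus>\<^bsub>A\<^esub> x) = \<ominus>\<^bsub>B\<^esub> f x" using hom_neg[OF assms(1,2,3)] Hc \<open>x \<in> H\<close> by blast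
      moreover have "\<ominus>\<^bsub>A\<^esub> x \<in> H" using A.submoduleE(3)[OF assms(4)] \<open>x \<in> H\<close> by blast
      ultimately show ?thesis by (metis rev_image_eqI)
    qed
    show "a \<oplus>\<^bsub>B\<^esub> b \<in> f ` H" if ha: "a \<in> f ` H" "b \<in> f ` H" for a b
    proof -
      obtain x y where "x \<in> H" "y \<in> H" "a = f x" "b = f y" using ha by auto
      moreover have "f (x \<oplus>\<^bsub>A\<^esub> y) = f x \<oplus>\<^bsub>B\<^esub> f y"
        using assms(3) Hc \<open>x \<in> H\<close> \<open>y \<in> H\<close> unfolding module_hom_def by blast
      moreover have "x \<oplus>\<^bsub>A\<^esub> y \<in> H" using A.submoduleE(5)[OF assms(4)] \<open>x \<in> H\<close> \<open>y \<in> H\<close> by blast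
      ultimately show ?thesis by (metis rev_image_eqI)
    qed
    show "a \<odot>\<^bsub>B\<^esub> x \<in> f ` H" if ha: "a \<in> carrier R" "x \<in> f ` H" for a x
    proof -
      obtain y where "y \<in> H" "x = f y" using ha by auto
      moreover have "f (a \<odot>\<^bsub>A\<^esub> y) = a \<odot>\<^bsub>B\<^esub> f y"
        using assms(3) Hc \<open>y \<in> H\<close> ha unfolding module_hom_def by blast
      moreover have "a \<odot>\<^bsub>A\<^esub> y \<in> H" using A.submoduleE(4)[OF assms(4)] \<open>y \<in> H\<close> ha by blast
      ultimately show ?thesis by (metis rev_image_eqI)
    qed
  qed
qed




definition qsupp :: "('a, 'r) ring_scheme \<Rightarrow> ('a, 'b) module \<Rightarrow> 'b set \<Rightarrow> 'a set set" where
  "qsupp R M N = {p. primeideal p R \<and> (\<exists>x\<in>carrier M. \<forall>s\<in>carrier R - p. s \<odot>\<^bsub>M\<^esub> x \<notin> N)}"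

definition DD :: "('a, 'r) ring_scheme \<Rightarrow> 'a set set \<Rightarrow> ereal" where
  "DD R P = Sup ((\<lambda>p. ereal_of_enat (dim_quot R p)) ` P)"

lemma DD_mono: "P \<subseteq> P' \<Longrightarrow> DD R P \<le> DD R P'"
  unfolding DD_def by (rule Sup_subset_mono) auto

lemma DD_Un: "DD R (P \<union> P') = sup (DD R P) (DD R P')"
  unfolding DD_def by (simp add: image_Un Sup_union_distrib)

context modl begin

lemma coset_eq: assumes "submodule N R M" "z \<in> carrier M"
  shows "{h \<oplus>\<^bsub>M\<^esub> z | h. h \<in> N} = N \<longleftrightarrow> z \<in> N"
proof
  have Nc: "N \<subseteq> carrier M" using submoduleE(1)[OF assms(1)] .
  assume "{h \<oplus>\<^bsub>M\<^esub> z | h. h \<in> N} = N"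
  moreover have "\<zero>\<^bsub>M\<^esub> \<oplus>\<^bsub>M\<^esub> z \<in> {h \<oplus>\<^bsub>M\<^esub> z | h. h \<in> N}" using sub_zero[OF assms(1)] by blast
  ultimately show "z \<in> N" using assms(2) by simp
next
  have Nc: "N \<subseteq> carrier M" using submoduleE(1)[OF assms(1)] .
  assume z: "z \<in> N"
  show "{h \<oplus>\<^bsub>M\<^esub> z | h. h \<in> N} = N"
  proof (intro equalityI subsetI)
    fix y assume "y \<in> {h \<oplus>\<^bsub>M\<^esub> z | h. h \<in> N}"
    then show "y \<in> N" using z submoduleE(5)[OF assms(1)] by blast
  next
    fix y assume y: "y \<in> N"
    have zc: "z \<in> carrier M" "y \<in> carrier M" using y z Nc by auto
    have "y = (y \<ominus>\<^bsub>M\<^esub> z) \<oplus>\<^bsub>M\<^esub> z" using zc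
      by (simp add: a_minus_def M.a_assoc M.l_neg)
    moreover have "y \<ominus>\<^bsub>M\<^esub> z \<in> N" using sub_minus[OF assms(1) y z] .
    ultimately show "y \<in> {h \<oplus>\<^bsub>M\<^esub> z | h. h \<in> N}" by blast
  qed
qed

lemma smult_coset: assumes "submodule N R M" "x \<in> carrier M" "s \<in> carrier R"
  shows "quot_smult M N s {h \<oplus>\<^bsub>M\<^esub> x | h. h \<in> N} = {h \<oplus>\<^bsub>M\<^esub> (s \<odot>\<^bsub>M\<^esub> x) | h. h \<in> N}"
proof -
  have Nc: "N \<subseteq> carrier M" using submoduleE(1)[OF assms(1)] .
  show ?thesis unfolding quot_smult_def
  proof (intro equalityI subsetI)
    fix y assume "y \<in> (\<Union>y\<in>{h \<oplus>\<^bsub>M\<^esub> x | h. h \<in> N}. {h \<oplus>\<^bsub>M\<^esub> (s \<odot>\<^bsub>M\<^esub> y) | h. h \<in> N})"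
    then obtain h0 h where h0: "h0 \<in> N" and h: "h \<in> N" and y: "y = h \<oplus>\<^bsub>M\<^esub> (s \<odot>\<^bsub>M\<^esub> (h0 \<oplus>\<^bsub>M\<^esub> x))" by blast
    have c: "h0 \<in> carrier M" "h \<in> carrier M" using h0 h Nc by auto
    have "y = (h \<oplus>\<^bsub>M\<^esub> s \<odot>\<^bsub>M\<^esub> h0) \<oplus>\<^bsub>M\<^esub> (s \<odot>\<^bsub>M\<^esub> x)"
      using y c assms by (simp add: smult_r_distr M.a_assoc)
    moreover have "h \<oplus>\<^bsub>M\<^esub> s \<odot>\<^bsub>M\<^esub> h0 \<in> N" using submoduleE(4,5)[OF assms(1)] h h0 assms(3) by blast
    ultimately show "y \<in> {h \<oplus>\<^bsub>M\<^esub> (s \<odot>\<^bsub>M\<^esub> x) | h. h \<in> N}" by blast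
  next
    fix y assume "y \<in> {h \<oplus>\<^bsub>M\<^esub> (s \<odot>\<^bsub>M\<^esub> x) | h. h \<in> N}"
    then obtain h where h: "h \<in> N" "y = h \<oplus>\<^bsub>M\<^esub> (s \<odot>\<^bsub>M\<^esub> x)" by blast
    have "x \<in> {h \<oplus>\<^bsub>M\<^esub> x | h. h \<in> N}" using sub_zero[OF assms(1)] assms(2)
      by (metis (mono_tags, lifting) M.l_zero mem_Collect_eq)
    then show "y \<in> (\<Union>y\<in>{h \<oplus>\<^bsub>M\<^esub> x | h. h \<in> N}. {h \<oplus>\<^bsub>M\<^esub> (s \<odot>\<^bsub>M\<^esub> y) | h. h \<in> N})"
      using h by blast
  qed
qed

lemma supp_quot: assumes "submodule N R M"
  shows "supp R (quot_module R M N) = qsupp R M N"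
proof -
  have "(\<exists>Y\<in>carrier (quot_module R M N). \<forall>s\<in>carrier R - p. module.smult (quot_module R M N) s Y \<noteq> ring.zero (quot_module R M N))
     \<longleftrightarrow> (\<exists>x\<in>carrier M. \<forall>s\<in>carrier R - p. s \<odot>\<^bsub>M\<^esub> x \<notin> N)" for p
  proof -
    have "(\<exists>Y\<in>carrier (quot_module R M N). \<forall>s\<in>carrier R - p. module.smult (quot_module R M N) s Y \<noteq> ring.zero (quot_module R M N))
       \<longleftrightarrow> (\<exists>x\<in>carrier M. \<forall>s\<in>carrier R - p. quot_smult M N s {h \<oplus>\<^bsub>M\<^esub> x | h. h \<in> N} \<noteq> N)"
      unfolding quot_module_def by auto
    also have "\<dots> \<longleftrightarrow> (\<exists>x\<in>carrier M. \<forall>s\<in>carrier R - p. s \<odot>\<^bsub>M\<^esub> x \<notin> N)"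
      using smult_coset[OF assms] coset_eq[OF assms] by auto
    finally show ?thesis .
  qed
  then show ?thesis unfolding supp_def qsupp_def by auto
qed

lemma in_dim_less_iff:
  "in_dim_less R M n \<longleftrightarrow> (\<exists>S. finite S \<and> S \<subseteq> carrier M \<and> DD R (qsupp R M (gen_submodule R M S)) < ereal (real n))"
  unfolding in_dim_less_def fin_gen_submodule_def dim_supp_def
  using supp_quot gen_sub unfolding DD_def by metis

end



context modl begin

lemma ideal_lem:
  assumes K: "submodule K R M" and G: "submodule G R M" and a: "a \<in> carrier M"
  shows "ideal {r\<in>carrier R. \<exists>k\<in>K. k \<ominus>\<^bsub>M\<^esub> r \<odot>\<^bsub>M\<^esub> a \<in> G} R"
proof -
  let ?I = "{r\<in>carrier R. \<exists>k\<in>K. k \<ominus>\<^bsub>M\<^esub> r \<odot>\<^bsub>M\<^esub> a \<in> G}"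
  have Kc: "K \<subseteq> carrier M" using submoduleE(1)[OF K] .
  have mul: "c \<otimes> r \<in> ?I" if hx: "r \<in> ?I" "c \<in> carrier R" for r c
  proof -
    obtain k where k: "k \<in> K" "k \<ominus>\<^bsub>M\<^esub> r \<odot>\<^bsub>M\<^esub> a \<in> G" "r \<in> carrier R" using hx by blast
    have kc: "k \<in> carrier M" using k Kc by auto
    have "c \<odot>\<^bsub>M\<^esub> k \<ominus>\<^bsub>M\<^esub> (c \<otimes> r) \<odot>\<^bsub>M\<^esub> a = c \<odot>\<^bsub>M\<^esub> (k \<ominus>\<^bsub>M\<^esub> r \<odot>\<^bsub>M\<^esub> a)"
      using kc k(3) hx(2) a by (simp add: a_minus_def smult_r_distr smult_r_minus smult_assoc1)
    moreover have "c \<odot>\<^bsub>M\<^esub> (k \<ominus>\<^bsub>M\<^esub> r \<odot>\<^bsub>M\<^esub> a) \<in> G" using submoduleE(4)[OF G] k hx(2) by blast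
    moreover have "c \<odot>\<^bsub>M\<^esub> k \<in> K" using submoduleE(4)[OF K] k hx(2) by blast
    ultimately have "c \<odot>\<^bsub>M\<^esub> k \<in> K \<and> c \<odot>\<^bsub>M\<^esub> k \<ominus>\<^bsub>M\<^esub> (c \<otimes> r) \<odot>\<^bsub>M\<^esub> a \<in> G" by simp
    then show ?thesis using hx k(3) by blast
  qed
  show ?thesis
  proof (rule idealI)
    show "ring R" by (rule R.ring_axioms)
    show "subgroup ?I (add_monoid R)"
    proof (rule R.add.subgroupI)
      show "?I \<subseteq> carrier R" by auto
      have "\<zero> \<in> ?I" using sub_zero[OF K] sub_zero[OF G] submoduleE(3)[OF G, of "\<zero>\<^bsub>M\<^esub>"] a by (auto simp: a_minus_def M.add.inv_one intro!: bexI[of _ "\<zero>\<^bsub>M\<^esub>"])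
      then show "?I \<noteq> {}" by blast
      show "\<ominus> r \<in> ?I" if hx: "r \<in> ?I" for r
      proof -
        have "(\<ominus> \<one>) \<otimes> r \<in> ?I" using mul hx by auto
        then show ?thesis using hx by (simp add: R.l_minus)
      qed
      show "r1 \<oplus> r2 \<in> ?I" if hx: "r1 \<in> ?I" "r2 \<in> ?I" for r1 r2
      proof -
        obtain k1 where k1: "k1 \<in> K" "k1 \<ominus>\<^bsub>M\<^esub> r1 \<odot>\<^bsub>M\<^esub> a \<in> G" "r1 \<in> carrier R" using hx by blast
        obtain k2 where k2: "k2 \<in> K" "k2 \<ominus>\<^bsub>M\<^esub> r2 \<odot>\<^bsub>M\<^esub> a \<in> G" "r2 \<in> carrier R" using hx by blast
        have kc: "k1 \<in> carrier M" "k2 \<in> carrier M" using k1 k2 Kc by auto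
        have "(k1 \<oplus>\<^bsub>M\<^esub> k2) \<ominus>\<^bsub>M\<^esub> (r1 \<oplus> r2) \<odot>\<^bsub>M\<^esub> a = (k1 \<ominus>\<^bsub>M\<^esub> r1 \<odot>\<^bsub>M\<^esub> a) \<oplus>\<^bsub>M\<^esub> (k2 \<ominus>\<^bsub>M\<^esub> r2 \<odot>\<^bsub>M\<^esub> a)"
          using kc k1(3) k2(3) a by (simp add: a_minus_def smult_l_distr M.minus_add M.a_ac)
        moreover have "(k1 \<ominus>\<^bsub>M\<^esub> r1 \<odot>\<^bsub>M\<^esub> a) \<oplus>\<^bsub>M\<^esub> (k2 \<ominus>\<^bsub>M\<^esub> r2 \<odot>\<^bsub>M\<^esub> a) \<in> G"
          using submoduleE(5)[OF G] k1 k2 by blast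
        moreover have "k1 \<oplus>\<^bsub>M\<^esub> k2 \<in> K" using submoduleE(5)[OF K] k1 k2 by blast
        ultimately show ?thesis using k1(3) k2(3) by (intro CollectI conjI R.add.m_closed bexI[of _ "k1 \<oplus>\<^bsub>M\<^esub> k2"]) simp_all
      qed
    qed
    show "x \<otimes> r \<in> ?I" if "r \<in> ?I" "x \<in> carrier R" for r x using mul that by blast
    show "r \<otimes> x \<in> ?I" if "r \<in> ?I" "x \<in> carrier R" for r x using mul that by (auto simp: R.m_comm)
  qed
qed

end


context modl begin
lemma span_insert:
  assumes a: "a \<in> carrier M" and S: "S \<subseteq> carrier M"
  shows "gen_submodule R M (insert a S) \<subseteq> {r \<odot>\<^bsub>M\<^esub> a \<oplus>\<^bsub>M\<^esub> y | r y. r \<in> carrier R \<and> y \<in> gen_submodule R M S}"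
proof (rule gen_min)
  let ?G = "gen_submodule R M S"
  let ?E = "{r \<odot>\<^bsub>M\<^esub> a \<oplus>\<^bsub>M\<^esub> y | r y. r \<in> carrier R \<and> y \<in> ?G}"
  have G: "submodule ?G R M" using gen_sub[OF S] .
  have Gc: "?G \<subseteq> carrier M" using submoduleE(1)[OF G] .
  have memE: "r \<odot>\<^bsub>M\<^esub> a \<oplus>\<^bsub>M\<^esub> y \<in> ?E" if "r \<in> carrier R" "y \<in> ?G" for r y using that by blast
  show "insert a S \<subseteq> ?E"
  proof
    fix x assume "x \<in> insert a S"
    then show "x \<in> ?E"
    proof
      assume "x = a"
      then have "x = \<one> \<odot>\<^bsub>M\<^esub> a \<oplus>\<^bsub>M\<^esub> \<zero>\<^bsub>M\<^esub>" using a by simp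
      then show ?thesis using sub_zero[OF G] memE[of "\<one>" "\<zero>\<^bsub>M\<^esub>"] by simp
    next
      assume "x \<in> S"
      then have "x = \<zero> \<odot>\<^bsub>M\<^esub> a \<oplus>\<^bsub>M\<^esub> x" "x \<in> ?G" using a S gen_incl by auto
      then show ?thesis using memE[of "\<zero>" x] by simp
    qed
  qed
  show "submodule ?E R M"
  proof (rule submoduleI)
    show "?E \<subseteq> carrier M" using Gc a by auto
    have "\<zero>\<^bsub>M\<^esub> = \<zero> \<odot>\<^bsub>M\<^esub> a \<oplus>\<^bsub>M\<^esub> \<zero>\<^bsub>M\<^esub>" using a by simp
    then show "\<zero>\<^bsub>M\<^esub> \<in> ?E" using sub_zero[OF G] memE[of "\<zero>" "\<zero>\<^bsub>M\<^esub>"] by simp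
    show "\<ominus>\<^bsub>M\<^esub> x \<in> ?E" if hx: "x \<in> ?E" for x
    proof -
      obtain r y where ry: "r \<in> carrier R" "y \<in> ?G" "x = r \<odot>\<^bsub>M\<^esub> a \<oplus>\<^bsub>M\<^esub> y" using hx by blast
      have "\<ominus>\<^bsub>M\<^esub> x = (\<ominus> r) \<odot>\<^bsub>M\<^esub> a \<oplus>\<^bsub>M\<^esub> (\<ominus>\<^bsub>M\<^esub> y)"
        using ry a \<open>y \<in> ?G\<close> Gc by (subst ry(3), subst M.minus_add) (auto simp: smult_l_minus)
      moreover have "\<ominus>\<^bsub>M\<^esub> y \<in> ?G" using submoduleE(3)[OF G] ry by blast
      ultimately show ?thesis using memE[of "\<ominus> r" "\<ominus>\<^bsub>M\<^esub> y"] ry by simp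
    qed
    show "x1 \<oplus>\<^bsub>M\<^esub> x2 \<in> ?E" if hx: "x1 \<in> ?E" "x2 \<in> ?E" for x1 x2
    proof -
      obtain r1 y1 where r1: "r1 \<in> carrier R" "y1 \<in> ?G" "x1 = r1 \<odot>\<^bsub>M\<^esub> a \<oplus>\<^bsub>M\<^esub> y1" using hx by blast
      obtain r2 y2 where r2: "r2 \<in> carrier R" "y2 \<in> ?G" "x2 = r2 \<odot>\<^bsub>M\<^esub> a \<oplus>\<^bsub>M\<^esub> y2" using hx by blast
      have "x1 \<oplus>\<^bsub>M\<^esub> x2 = (r1 \<oplus> r2) \<odot>\<^bsub>M\<^esub> a \<oplus>\<^bsub>M\<^esub> (y1 \<oplus>\<^bsub>M\<^esub> y2)"
      proof -
        have c: "y1 \<in> carrier M" "y2 \<in> carrier M" using r1 r2 Gc by auto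
        show ?thesis using r1 r2 c a by (simp add: smult_l_distr M.a_ac)
      qed
      moreover have "y1 \<oplus>\<^bsub>M\<^esub> y2 \<in> ?G" using submoduleE(5)[OF G] r1 r2 by blast
      ultimately show ?thesis using memE[of "r1 \<oplus> r2" "y1 \<oplus>\<^bsub>M\<^esub> y2"] r1 r2 by simp
    qed
    show "c \<odot>\<^bsub>M\<^esub> x \<in> ?E" if hx: "c \<in> carrier R" "x \<in> ?E" for c x
    proof -
      obtain r y where ry: "r \<in> carrier R" "y \<in> ?G" "x = r \<odot>\<^bsub>M\<^esub> a \<oplus>\<^bsub>M\<^esub> y" using hx by blast
      have "c \<odot>\<^bsub>M\<^esub> x = (c \<otimes> r) \<odot>\<^bsub>M\<^esub> a \<oplus>\<^bsub>M\<^esub> (c \<odot>\<^bsub>M\<^esub> y)"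
      proof -
        have c: "y \<in> carrier M" using ry Gc by auto
        show ?thesis using ry c a hx(1) by (simp add: smult_r_distr smult_assoc1)
      qed
      moreover have "c \<odot>\<^bsub>M\<^esub> y \<in> ?G" using submoduleE(4)[OF G] ry hx(1) by blast
      ultimately show ?thesis using memE[of "c \<otimes> r" "c \<odot>\<^bsub>M\<^esub> y"] ry hx(1) by simp
    qed
  qed
qed

end


context modl begin

lemma sub_inter: "submodule K R M \<Longrightarrow> submodule G R M \<Longrightarrow> submodule (K \<inter> G) R M"
  apply (rule submoduleI)
  using submoduleE[of K] submoduleE[of G] sub_zero[of K] sub_zero[of G] by auto

lemma neg_lcomm: "x \<in> carrier M \<Longrightarrow> y \<in> carrier M \<Longrightarrow> x \<oplus>\<^bsub>M\<^esub> (y \<oplus>\<^bsub>M\<^esub> \<ominus>\<^bsub>M\<^esub> x) = y"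
  by (metis M.a_lcomm M.add.inv_closed M.r_neg M.r_zero)

lemma alg1: "x \<in> carrier M \<Longrightarrow> y \<in> carrier M \<Longrightarrow> (x \<oplus>\<^bsub>M\<^esub> y) \<ominus>\<^bsub>M\<^esub> x = y"
  by (simp add: a_minus_def M.a_ac M.r_neg M.l_neg neg_lcomm)

lemma alg2: "k \<in> carrier M \<Longrightarrow> k' \<in> carrier M \<Longrightarrow> z \<in> carrier M \<Longrightarrow>
   (k \<ominus>\<^bsub>M\<^esub> z) \<ominus>\<^bsub>M\<^esub> (k' \<ominus>\<^bsub>M\<^esub> z) = k \<ominus>\<^bsub>M\<^esub> k'"
  by (simp add: a_minus_def M.a_ac M.r_neg M.l_neg neg_lcomm M.minus_add)

lemma alg3: "d \<in> carrier M \<Longrightarrow> k' \<in> carrier M \<Longrightarrow> (d \<ominus>\<^bsub>M\<^esub> k') \<oplus>\<^bsub>M\<^esub> k' = d"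
  by (simp add: a_minus_def M.a_assoc M.l_neg)


lemma noeth_fg:
  assumes N: "noetherian_ring R" and fin: "finite S" and Sc: "S \<subseteq> carrier M"
  shows "\<forall>K. submodule K R M \<longrightarrow> K \<subseteq> gen_submodule R M S \<longrightarrow>
           (\<exists>T. finite T \<and> T \<subseteq> K \<and> K = gen_submodule R M T)"
  using fin Sc
proof (induction S rule: finite_induct)
  case empty
  show ?case
  proof (intro allI impI)
    fix K assume K: "submodule K R M" and Ks: "K \<subseteq> gen_submodule R M {}"
    have "gen_submodule R M {} \<subseteq> K" using gen_min[OF K] by simp
    then show "\<exists>T. finite T \<and> T \<subseteq> K \<and> K = gen_submodule R M T" using Ks by (intro exI[of _ "{}"]) auto
  qed
next
  case (insert a S0)
  have a: "a \<in> carrier M" and S0: "S0 \<subseteq> carrier M" using insert.prems by auto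
  note IH = insert.IH[OF S0]
  show ?case
  proof (intro allI impI)
    fix K assume K: "submodule K R M" and Ks: "K \<subseteq> gen_submodule R M (insert a S0)"
    let ?G = "gen_submodule R M S0"
    have G: "submodule ?G R M" using gen_sub[OF S0] .
    have Kc: "K \<subseteq> carrier M" using submoduleE(1)[OF K] .
    have Gc: "?G \<subseteq> carrier M" using submoduleE(1)[OF G] .
    obtain T0 where T0: "finite T0" "T0 \<subseteq> K \<inter> ?G" "K \<inter> ?G = gen_submodule R M T0"
      using IH[rule_format, OF sub_inter[OF K G] Int_lower2] by blast
    let ?I = "{r\<in>carrier R. \<exists>k\<in>K. k \<ominus>\<^bsub>M\<^esub> r \<odot>\<^bsub>M\<^esub> a \<in> ?G}"
    have I: "ideal ?I R" using ideal_lem[OF K G a] .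
    obtain A where A: "A \<subseteq> carrier R" "finite A" "?I = Idl A"
      using noetherian_ring.finetely_gen[OF N I] by blast
    have "A \<subseteq> ?I" using A R.genideal_self[OF A(1)] by simp
    then have "\<forall>r\<in>A. \<exists>k. k \<in> K \<and> k \<ominus>\<^bsub>M\<^esub> r \<odot>\<^bsub>M\<^esub> a \<in> ?G" by blast
    then have "\<exists>kf. \<forall>r\<in>A. kf r \<in> K \<and> kf r \<ominus>\<^bsub>M\<^esub> r \<odot>\<^bsub>M\<^esub> a \<in> ?G" by (rule bchoice)
    then obtain kf where kf: "\<And>r. r \<in> A \<Longrightarrow> kf r \<in> K \<and> kf r \<ominus>\<^bsub>M\<^esub> r \<odot>\<^bsub>M\<^esub> a \<in> ?G"
      by blast
    define T where "T = T0 \<union> kf ` A"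
    have Tfin: "finite T" using T0(1) A(2) unfolding T_def by simp
    have TK: "T \<subseteq> K" using T0(2) kf unfolding T_def by blast
    have Tc: "T \<subseteq> carrier M" using TK Kc by blast
    let ?K' = "gen_submodule R M T"
    have K': "submodule ?K' R M" using gen_sub[OF Tc] .
    have K'K: "?K' \<subseteq> K" using gen_min[OF K TK] .
    let ?I' = "{r\<in>carrier R. \<exists>k\<in>?K'. k \<ominus>\<^bsub>M\<^esub> r \<odot>\<^bsub>M\<^esub> a \<in> ?G}"
    have I': "ideal ?I' R" using ideal_lem[OF K' G a] .
    have "A \<subseteq> ?I'"
    proof
      fix r assume r: "r \<in> A"
      have "kf r \<in> ?K'" using gen_incl[of T] r unfolding T_def by blast
      then show "r \<in> ?I'" using kf[OF r] r A(1) by blast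
    qed
    then have II': "?I \<subseteq> ?I'" using R.genideal_minimal[OF I'] A(3) by simp
    have "K \<subseteq> ?K'"
    proof
      fix k assume k: "k \<in> K"
      have "k \<in> gen_submodule R M (insert a S0)" using k Ks by blast
      then obtain r y where ry: "r \<in> carrier R" "y \<in> ?G" "k = r \<odot>\<^bsub>M\<^esub> a \<oplus>\<^bsub>M\<^esub> y"
        using span_insert[OF a S0] by blast
      have yc: "y \<in> carrier M" using ry Gc by blast
      have "k \<ominus>\<^bsub>M\<^esub> r \<odot>\<^bsub>M\<^esub> a = y" using ry(3) alg1[OF _ yc, of "r \<odot>\<^bsub>M\<^esub> a"] ry(1) a by simp
      then have "r \<in> ?I" using k ry by blast
      then have "r \<in> ?I'" using II' by blast
      then obtain k' where k': "k' \<in> ?K'" "k' \<ominus>\<^bsub>M\<^esub> r \<odot>\<^bsub>M\<^esub> a \<in> ?G" by blast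
      have kc: "k \<in> carrier M" "k' \<in> carrier M" using k k' K'K Kc by auto
      have "(k \<ominus>\<^bsub>M\<^esub> r \<odot>\<^bsub>M\<^esub> a) \<ominus>\<^bsub>M\<^esub> (k' \<ominus>\<^bsub>M\<^esub> r \<odot>\<^bsub>M\<^esub> a) \<in> ?G"
        using sub_minus[OF G] \<open>k \<ominus>\<^bsub>M\<^esub> r \<odot>\<^bsub>M\<^esub> a = y\<close> ry(2) k'(2) by simp
      then have dG: "k \<ominus>\<^bsub>M\<^esub> k' \<in> ?G" using alg2[OF kc, of "r \<odot>\<^bsub>M\<^esub> a"] ry(1) a by simp
      have dK: "k \<ominus>\<^bsub>M\<^esub> k' \<in> K" using sub_minus[OF K k] k'(1) K'K by blast
      have "k \<ominus>\<^bsub>M\<^esub> k' \<in> gen_submodule R M T0" using dG dK T0(3) by blast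
      moreover have "gen_submodule R M T0 \<subseteq> ?K'" using gen_mono[of T0 T] Tc unfolding T_def by blast
      ultimately have "k \<ominus>\<^bsub>M\<^esub> k' \<in> ?K'" by blast
      then have "(k \<ominus>\<^bsub>M\<^esub> k') \<oplus>\<^bsub>M\<^esub> k' \<in> ?K'" using submoduleE(5)[OF K'] k'(1) by blast
      then show "k \<in> ?K'" using alg3[OF kc] by simp
    qed
    then show "\<exists>T. finite T \<and> T \<subseteq> K \<and> K = gen_submodule R M T"
      using K'K Tfin TK by blast
  qed
qed

end



lemma hom_gen_image:
  assumes A: "module R A" and B: "module R B" and h: "module_hom R A B g"
    and S: "S \<subseteq> carrier A" 
  shows "g ` gen_submodule R A S \<subseteq> gen_submodule R B (g ` S)"
proof -
  interpret A: modl R A using A by (simp add: modl_def)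
  interpret B: modl R B using B by (simp add: modl_def)
  have gS: "g ` S \<subseteq> carrier B" using h S unfolding module_hom_def by auto
  have "submodule {x \<in> carrier A. g x \<in> gen_submodule R B (g ` S)} R A"
    using hom_preimage_sub[OF A B h B.gen_sub[OF gS]] .
  moreover have "S \<subseteq> {x \<in> carrier A. g x \<in> gen_submodule R B (g ` S)}"
    using S B.gen_incl[of "g ` S"] by auto
  ultimately have "gen_submodule R A S \<subseteq> {x \<in> carrier A. g x \<in> gen_submodule R B (g ` S)}"
    by (rule A.gen_min)
  then show ?thesis by blast
qed

lemma E1:
  assumes A: "module R A" and B: "module R B" and h: "module_hom R A B g"
    and surj: "g ` carrier A = carrier B" and S: "S \<subseteq> carrier A"
  shows "qsupp R B (gen_submodule R B (g ` S)) \<subseteq> qsupp R A (gen_submodule R A S)"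
proof
  interpret A: modl R A using A by (simp add: modl_def)
  interpret B: modl R B using B by (simp add: modl_def)
  fix p assume "p \<in> qsupp R B (gen_submodule R B (g ` S))"
  then obtain z where p: "primeideal p R" and z: "z \<in> carrier B"
    and nz: "\<forall>s\<in>carrier R - p. s \<odot>\<^bsub>B\<^esub> z \<notin> gen_submodule R B (g ` S)"
    unfolding qsupp_def by blast
  obtain x where x: "x \<in> carrier A" "z = g x" using z surj by blast
  have "s \<odot>\<^bsub>A\<^esub> x \<notin> gen_submodule R A S" if s: "s \<in> carrier R - p" for s
  proof
    assume "s \<odot>\<^bsub>A\<^esub> x \<in> gen_submodule R A S"
    then have "g (s \<odot>\<^bsub>A\<^esub> x) \<in> gen_submodule R B (g ` S)" using hom_gen_image[OF A B h S] by blast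
    moreover have "g (s \<odot>\<^bsub>A\<^esub> x) = s \<odot>\<^bsub>B\<^esub> z" using h x s unfolding module_hom_def by auto
    ultimately show False using nz s by auto
  qed
  then show "p \<in> qsupp R A (gen_submodule R A S)" unfolding qsupp_def using p x(1) by blast
qed

lemma E2:
  assumes A: "module R A" and B: "module R B" and h: "module_hom R A B f"
    and inj: "inj_on f (carrier A)" and N: "noetherian_ring R"
    and Sf: "finite S" and S: "S \<subseteq> carrier B"
  shows "\<exists>T'. finite T' \<and> T' \<subseteq> carrier A \<and>
            qsupp R A (gen_submodule R A T') \<subseteq> qsupp R B (gen_submodule R B S)"
proof -
  interpret A: modl R A using A by (simp add: modl_def)
  interpret B: modl R B using B by (simp add: modl_def)
  let ?N = "gen_submodule R B S"
  have Nsub: "submodule ?N R B" using B.gen_sub[OF S] .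
  have fc: "\<And>y. y \<in> carrier A \<Longrightarrow> f y \<in> carrier B" using h unfolding module_hom_def by auto
  have Im: "submodule (f ` carrier A) R B" using hom_image_sub[OF A B h A.carrier_is_submodule] .
  let ?K' = "?N \<inter> f ` carrier A"
  have K': "submodule ?K' R B" using B.sub_inter[OF Nsub Im] .
  obtain T where T: "finite T" "T \<subseteq> ?K'" "?K' = gen_submodule R B T"
    using B.noeth_fg[OF N Sf S, rule_format, OF K'] by blast
  define T' where "T' = {y \<in> carrier A. f y \<in> T}"
  have T'c: "T' \<subseteq> carrier A" unfolding T'_def by auto
  have "finite (f ` T')" using T(1) by (rule finite_subset[rotated]) (auto simp: T'_def)
  then have T'f: "finite T'" using inj_on_subset[OF inj T'c] finite_imageD by blast
  let ?G = "gen_submodule R A T'"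
  have Gsub: "submodule ?G R A" using A.gen_sub[OF T'c] .
  have Gc: "?G \<subseteq> carrier A" using A.submoduleE(1)[OF Gsub] .
  have fG: "submodule (f ` ?G) R B" using hom_image_sub[OF A B h Gsub] .
  have "T \<subseteq> f ` ?G"
  proof
    fix t assume t: "t \<in> T"
    then obtain y where y: "y \<in> carrier A" "t = f y" using T(2) by blast
    then have "y \<in> T'" using t unfolding T'_def by simp
    then have "y \<in> ?G" using A.gen_incl by blast
    then show "t \<in> f ` ?G" using y by blast
  qed
  then have TG: "gen_submodule R B T \<subseteq> f ` ?G" using B.gen_min[OF fG] by blast
  have key: "y \<in> ?G" if y: "y \<in> carrier A" "f y \<in> ?N" for y
  proof -
    have "f y \<in> gen_submodule R B T" using y T(3) by blast
    then obtain y' where y': "y' \<in> ?G" "f y = f y'" using TG by blast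
    have "y = y'" using inj y(1) y' Gc unfolding inj_on_def by blast
    then show ?thesis using y' by simp
  qed
  have "qsupp R A ?G \<subseteq> qsupp R B ?N"
  proof
    fix p assume "p \<in> qsupp R A ?G"
    then obtain z where p: "primeideal p R" and z: "z \<in> carrier A"
      and nz: "\<forall>s\<in>carrier R - p. s \<odot>\<^bsub>A\<^esub> z \<notin> ?G"
      unfolding qsupp_def by blast
    have "s \<odot>\<^bsub>B\<^esub> f z \<notin> ?N" if s: "s \<in> carrier R - p" for s
    proof
      assume "s \<odot>\<^bsub>B\<^esub> f z \<in> ?N"
      moreover have "f (s \<odot>\<^bsub>A\<^esub> z) = s \<odot>\<^bsub>B\<^esub> f z" using h z s unfolding module_hom_def by auto
      ultimately have "s \<odot>\<^bsub>A\<^esub> z \<in> ?G" using key[of "s \<odot>\<^bsub>A\<^esub> z"] z s by auto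
      then show False using nz s by blast
    qed
    then show "p \<in> qsupp R B ?N" unfolding qsupp_def using p fc[OF z] by blast
  qed
  then show ?thesis using T'f T'c by blast
qed

lemma E3:
  assumes A: "module R A" and B: "module R B" and C: "module R C"
    and ex: "short_exact R A B C f g"
    and S1f: "finite S1" and S1: "S1 \<subseteq> carrier A"
    and S2f: "finite S2" and S2: "S2 \<subseteq> carrier C"
  shows "\<exists>S. finite S \<and> S \<subseteq> carrier B \<and>
     qsupp R B (gen_submodule R B S) \<subseteq> qsupp R A (gen_submodule R A S1) \<union> qsupp R C (gen_submodule R C S2)"
proof -
  interpret A: modl R A using A by (simp add: modl_def)
  interpret B: modl R B using B by (simp add: modl_def)
  interpret C: modl R C using C by (simp add: modl_def)
  have hf: "module_hom R A B f" and hg: "module_hom R B C g" and surj: "g ` carrier B = carrier C"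
    and ker: "f ` carrier A = {y \<in> carrier B. g y = \<zero>\<^bsub>C\<^esub>}"
    using ex unfolding short_exact_def by auto
  have fc: "\<And>y. y \<in> carrier A \<Longrightarrow> f y \<in> carrier B" using hf unfolding module_hom_def by auto
  have gc: "\<And>y. y \<in> carrier B \<Longrightarrow> g y \<in> carrier C" using hg unfolding module_hom_def by auto
  obtain S0 where S0: "S0 \<subseteq> carrier B" "finite S0" "S2 = g ` S0"
    using finite_subset_image[OF S2f] S2 surj by metis
  define S where "S = f ` S1 \<union> S0"
  have Sf: "finite S" using S1f S0(2) unfolding S_def by simp
  have Sc: "S \<subseteq> carrier B" using S0(1) S1 fc unfolding S_def by auto
  let ?N = "gen_submodule R B S"
  have Nsub: "submodule ?N R B" using B.gen_sub[OF Sc] .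
  have Nc: "?N \<subseteq> carrier B" using B.submoduleE(1)[OF Nsub] .
  have fN: "f ` gen_submodule R A S1 \<subseteq> ?N"
    using hom_gen_image[OF A B hf S1] B.gen_mono[of "f ` S1" S] Sc unfolding S_def by blast
  have G0N: "gen_submodule R B S0 \<subseteq> ?N" using B.gen_mono[of S0 S] Sc unfolding S_def by blast
  have G0sub: "submodule (gen_submodule R B S0) R B" using B.gen_sub[OF S0(1)] .
  have gG0: "submodule (g ` gen_submodule R B S0) R C" using hom_image_sub[OF B C hg G0sub] .
  have "S2 \<subseteq> g ` gen_submodule R B S0" using S0(3) B.gen_incl[of S0] by blast
  then have G2: "gen_submodule R C S2 \<subseteq> g ` gen_submodule R B S0" using C.gen_min[OF gG0] by blast
  have "qsupp R B ?N \<subseteq> qsupp R A (gen_submodule R A S1) \<union> qsupp R C (gen_submodule R C S2)"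
  proof
    fix p assume "p \<in> qsupp R B ?N"
    then obtain x where p: "primeideal p R" and x: "x \<in> carrier B"
      and nx: "\<forall>s\<in>carrier R - p. s \<odot>\<^bsub>B\<^esub> x \<notin> ?N"
      unfolding qsupp_def by blast
    have pc: "p \<subseteq> carrier R" using p by (simp add: primeideal_def ideal_def additive_subgroup.a_subset)
    show "p \<in> qsupp R A (gen_submodule R A S1) \<union> qsupp R C (gen_submodule R C S2)"
    proof (rule ccontr)
      assume "\<not> ?thesis"
      then have nA: "\<not> (\<exists>u\<in>carrier A. \<forall>s\<in>carrier R - p. s \<odot>\<^bsub>A\<^esub> u \<notin> gen_submodule R A S1)"
        and nC: "\<not> (\<exists>z\<in>carrier C. \<forall>s\<in>carrier R - p. s \<odot>\<^bsub>C\<^esub> z \<notin> gen_submodule R C S2)"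
        using p unfolding qsupp_def by auto
      obtain s where s: "s \<in> carrier R - p" "s \<odot>\<^bsub>C\<^esub> g x \<in> gen_submodule R C S2"
        using nC gc[OF x] by blast
      obtain y where y: "y \<in> gen_submodule R B S0" "s \<odot>\<^bsub>C\<^esub> g x = g y" using s(2) G2 by blast
      have yc: "y \<in> carrier B" using y(1) G0N Nc by blast
      have sx: "s \<odot>\<^bsub>B\<^esub> x \<in> carrier B" using s x by simp
      have gsx: "g (s \<odot>\<^bsub>B\<^esub> x) = s \<odot>\<^bsub>C\<^esub> g x" using hg x s unfolding module_hom_def by auto
      define w where "w = s \<odot>\<^bsub>B\<^esub> x \<ominus>\<^bsub>B\<^esub> y"
      have wc: "w \<in> carrier B" unfolding w_def using sx yc by simp
      have "g w = g (s \<odot>\<^bsub>B\<^esub> x) \<ominus>\<^bsub>C\<^esub> g y" unfolding w_def using hom_minus[OF B C hg sx yc] .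
      also have "\<dots> = \<zero>\<^bsub>C\<^esub>" using gsx y(2) gc[OF yc] by (simp add: a_minus_def C.M.r_neg)
      finally have "w \<in> f ` carrier A" using ker wc by blast
      then obtain u where u: "u \<in> carrier A" "w = f u" by blast
      obtain t where t: "t \<in> carrier R - p" "t \<odot>\<^bsub>A\<^esub> u \<in> gen_submodule R A S1"
        using nA u(1) by blast
      have "f (t \<odot>\<^bsub>A\<^esub> u) = t \<odot>\<^bsub>B\<^esub> w" using hf u t unfolding module_hom_def by auto
      then have tw: "t \<odot>\<^bsub>B\<^esub> w \<in> ?N" using fN t(2) by (metis image_eqI subsetD)
      have ty: "t \<odot>\<^bsub>B\<^esub> y \<in> ?N" using B.submoduleE(4)[OF Nsub] t(1) y(1) G0N by blast
      have "t \<odot>\<^bsub>B\<^esub> w \<oplus>\<^bsub>B\<^esub> t \<odot>\<^bsub>B\<^esub> y = t \<odot>\<^bsub>B\<^esub> (w \<oplus>\<^bsub>B\<^esub> y)"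
        using t(1) wc yc by (simp add: B.smult_r_distr)
      also have "w \<oplus>\<^bsub>B\<^esub> y = s \<odot>\<^bsub>B\<^esub> x" unfolding w_def using B.alg3[OF sx yc] .
      also have "t \<odot>\<^bsub>B\<^esub> (s \<odot>\<^bsub>B\<^esub> x) = (t \<otimes>\<^bsub>R\<^esub> s) \<odot>\<^bsub>B\<^esub> x" using t(1) s(1) x by (simp add: B.smult_assoc1)
      finally have "(t \<otimes>\<^bsub>R\<^esub> s) \<odot>\<^bsub>B\<^esub> x \<in> ?N" using B.submoduleE(5)[OF Nsub] tw ty by metis
      moreover have "t \<otimes>\<^bsub>R\<^esub> s \<in> carrier R - p"
        using primeideal.I_prime[OF p, of t s] t(1) s(1) by auto
      ultimately show False using nx by blast
    qed
  qed
  then show ?thesis using Sf Sc by blast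
qed

theorem proposition2p12:
  fixes R :: "'a ring"
    and M' :: "('a, 'b) module" and M :: "('a, 'c) module" and M'' :: "('a, 'd) module"
    and f :: "'b \<Rightarrow> 'c" and g :: "'c \<Rightarrow> 'd" and n :: nat
  assumes "cring R" and "noetherian_ring R"
    and "module R M'" and "module R M" and "module R M''"
    and "short_exact R M' M M'' f g"
  shows "in_dim_less R M n \<longleftrightarrow> in_dim_less R M' n \<and> in_dim_less R M'' n"
proof -
  have A: "modl R M'" and B: "modl R M" and C: "modl R M''" using assms(3-5) by (simp_all add: modl_def)
  have hf: "module_hom R M' M f" and hg: "module_hom R M M'' g" and surj: "g ` carrier M = carrier M''"
    and inj: "inj_on f (carrier M')"
    using assms(6) unfolding short_exact_def by auto
  show ?thesis
  proof
    assume "in_dim_less R M n"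
    then obtain S where S: "finite S" "S \<subseteq> carrier M" "DD R (qsupp R M (gen_submodule R M S)) < ereal (real n)"
      using modl.in_dim_less_iff[OF B] by blast
    obtain T' where T': "finite T'" "T' \<subseteq> carrier M'"
      "qsupp R M' (gen_submodule R M' T') \<subseteq> qsupp R M (gen_submodule R M S)"
      using E2[OF assms(3,4) hf inj assms(2) S(1,2)] by blast
    have "DD R (qsupp R M' (gen_submodule R M' T')) < ereal (real n)"
      using DD_mono[OF T'(3)] S(3) by (rule le_less_trans)
    then have 1: "in_dim_less R M' n" using modl.in_dim_less_iff[OF A] T'(1,2) by blast
    have gS: "finite (g ` S)" "g ` S \<subseteq> carrier M''" using S(1,2) surj by auto
    have "DD R (qsupp R M'' (gen_submodule R M'' (g ` S))) < ereal (real n)"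
      using DD_mono[OF E1[OF assms(4,5) hg surj S(2)]] S(3) by (rule le_less_trans)
    then have 2: "in_dim_less R M'' n" using modl.in_dim_less_iff[OF C] gS by blast
    show "in_dim_less R M' n \<and> in_dim_less R M'' n" using 1 2 by blast
  next
    assume "in_dim_less R M' n \<and> in_dim_less R M'' n"
    then obtain S1 S2 where S1: "finite S1" "S1 \<subseteq> carrier M'" "DD R (qsupp R M' (gen_submodule R M' S1)) < ereal (real n)"
      and S2: "finite S2" "S2 \<subseteq> carrier M''" "DD R (qsupp R M'' (gen_submodule R M'' S2)) < ereal (real n)"
      using modl.in_dim_less_iff[OF A] modl.in_dim_less_iff[OF C] by metis
    obtain S where S: "finite S" "S \<subseteq> carrier M"
      "qsupp R M (gen_submodule R M S) \<subseteq> qsupp R M' (gen_submodule R M' S1) \<union> qsupp R M'' (gen_submodule R M'' S2)"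
      using E3[OF assms(3,4,5,6) S1(1,2) S2(1,2)] by blast
    have "DD R (qsupp R M (gen_submodule R M S)) \<le> sup (DD R (qsupp R M' (gen_submodule R M' S1))) (DD R (qsupp R M'' (gen_submodule R M'' S2)))"
      using DD_mono[OF S(3)] DD_Un by metis
    also have "\<dots> < ereal (real n)" using S1(3) S2(3) by simp
    finally show "in_dim_less R M n" using modl.in_dim_less_iff[OF B] S(1,2) by blast
  qed
qed



end
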